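(* Assume the growth hypotheses described in the context, and in addition that $\int|x|^p\mu(dx)<\infty$ and that $c_1,c_2,a_+,a_-$ have growth of order at most $p$ (i.e. $|c_1(x)|+a_+(x)+a_-(x)\le M(1+|x|^p)$ and $|c_2(y)|\le M(1+|y|^p)$ for some $M$). Then there is a constant $K$ such that for every $f\in L^1(\mu)$ for which $f^c,f^{cc}$ are well defined and $f^c\in L^1(\nu)$, $$|f^{cc}(x)|\le\mu(f^-)+\nu((f^c)^-)+K(1+|x|^p),\qquad x\in\mathsf{X},$$ with $K$ independent of $f$. If $c$ is replaced by $c/\varepsilon$ with $\varepsilon\in(0,1)$ (and $c_1,c_2,\hat c,a_\pm,K^i_\pm$ correspondingly divided by $\varepsilon$), the corresponding bound holds with constant $\tilde K:=\varepsilon^{-\max\{p/\alpha,1\}}K$, where $\alpha:=\min_i\tilde\alpha_i=p-\max_i\beta_i$.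
   Context: $(\mathsf{X},d_{\mathsf{X}})$, $(\mathsf{Y},d_{\mathsf{Y}})$ are Polish metric spaces with reference points $x_0,y_0$; $|x|:=d_{\mathsf{X}}(x,x_0)$, $|y|:=d_{\mathsf{Y}}(y,y_0)$. $\mu\in\mathcal{P}(\mathsf{X})$, $\nu\in\mathcal{P}(\mathsf{Y})$, $c:\mathsf{X}\times\mathsf{Y}\to\mathbb{R}$ measurable; $\mu(h):=\int h\,d\mu$, $h^-=\max(-h,0)$. Conjugates: for measurable $f:\mathsf{X}\to[-\infty,\infty]$, $f^c(y):=-\log\int e^{f(x)-c(x,y)}\mu(dx)$ and $f^{cc}(x):=-\log\int e^{f^c(y)-c(x,y)}\nu(dy)$ (when the integrals are well defined). Growth hypotheses: fix $p>0$ with $\int e^{\lambda|y|^p}\nu(dy)<\infty$ for some $\lambda>0$; fix $N\ge0$ and $\alpha_i\in[0,p]$, $\beta_i\in[0,p)$ with $\alpha_i+\beta_i\le p$ ($1\le i\le N$), and set $\tilde\alpha_i:=p-\beta_i$. The cost has the form $c(x,y)=c_1(x)+c_2(y)+\hat c(x,y)$ with $c_1\in L^1(\mu)$, $c_2\in L^1(\nu)$ and $-a_-(x)-\sum_{i=1}^NK_-^i|x|^{\alpha_i}|y|^{\beta_i}\le\hat c(x,y)\le a_+(x)+\sum_{i=1}^NK_+^i|x|^{\alpha_i}|y|^{\beta_i}$, where $K_\pm^i\ge0$ and $a_\pm\ge0$ are measurable with $A_+:=\int a_+d\mu<\infty$. *)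

theory Defs
  imports "HOL-Probability.Probability"
begin

text \<open>Real power with the convention 0^0 = 1 (for nonnegative bases), used for
  the terms |x|^alpha_i |y|^beta_i where the exponents may vanish.\<close>
definition pw :: "real \<Rightarrow> real \<Rightarrow> real" where
  "pw t a = (if a = 0 then 1 else t powr a)"

definition eexp :: "ereal \<Rightarrow> ennreal" where
  "eexp t = (case t of ereal r \<Rightarrow> ennreal (exp r) | PInfty \<Rightarrow> \<infinity> | MInfty \<Rightarrow> 0)"

definition eln :: "ennreal \<Rightarrow> ereal" where
  "eln t = (if t = 0 then -\<infinity> else if t = \<infinity> then \<infinity> else ereal (ln (enn2real t)))"

definition cconj :: "'a measure \<Rightarrow> ('a \<Rightarrow> 'b \<Rightarrow> real) \<Rightarrow> ('a \<Rightarrow> ereal) \<Rightarrow> 'b \<Rightarrow> ereal" where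
  "cconj mu c f y = - eln (\<integral>\<^sup>+ x. eexp (f x - ereal (c x y)) \<partial>mu)"

text \<open>g^{c}(x) on the other side: - log \<integral> e^{g(y) - c(x,y)} nu(dy); f^cc = ccconj nu c (cconj mu c f)\<close>
definition ccconj :: "'b measure \<Rightarrow> ('a \<Rightarrow> 'b \<Rightarrow> real) \<Rightarrow> ('b \<Rightarrow> ereal) \<Rightarrow> 'a \<Rightarrow> ereal" where
  "ccconj nu c g x = - eln (\<integral>\<^sup>+ y. eexp (g y - ereal (c x y)) \<partial>nu)"

definition negpart :: "real \<Rightarrow> real" where
  "negpart t = max (- t) 0"

definition ereal_L1 :: "'b measure \<Rightarrow> ('b \<Rightarrow> ereal) \<Rightarrow> bool" where
  "ereal_L1 M g \<longleftrightarrow> g \<in> borel_measurable M \<and> (AE y in M. \<bar>g y\<bar> \<noteq> \<infinity>)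
     \<and> integrable M (\<lambda>y. real_of_ereal (g y))"

definition conj_bound :: "'a measure \<Rightarrow> 'b measure \<Rightarrow> ('a \<Rightarrow> 'b \<Rightarrow> real) \<Rightarrow> 'a::metric_space
    \<Rightarrow> real \<Rightarrow> real \<Rightarrow> bool" where
  "conj_bound mu nu c x0 p K \<longleftrightarrow>
    (\<forall>f. integrable mu f \<longrightarrow> ereal_L1 nu (cconj mu c (\<lambda>x. ereal (f x))) \<longrightarrow>
       (\<forall>z. \<bar>ccconj nu c (cconj mu c (\<lambda>x. ereal (f x))) z\<bar>
          \<le> ereal ((\<integral>x. negpart (f x) \<partial>mu)
                   + (\<integral>y. negpart (real_of_ereal (cconj mu c (\<lambda>x. ereal (f x)) y)) \<partial>nu)
                   + K * (1 + dist z x0 powr p))))"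

end

theory Submission
  imports Defs
begin

lemma ennreal_integral_le_nn:
  fixes h :: "'a \<Rightarrow> real"
  assumes "integrable M h"
  shows "ennreal (integral\<^sup>L M h) \<le> (\<integral>\<^sup>+ x. ennreal (h x) \<partial>M)"
proof -
  have "integral\<^sup>L M h \<le> integral\<^sup>L M (\<lambda>x. max 0 (h x))"
    using assms by (intro integral_mono) auto
  hence "ennreal (integral\<^sup>L M h) \<le> ennreal (integral\<^sup>L M (\<lambda>x. max 0 (h x)))"
    by (rule ennreal_leI)
  also have "\<dots> = (\<integral>\<^sup>+ x. ennreal (max 0 (h x)) \<partial>M)"
    using assms by (intro nn_integral_eq_integral[symmetric]) auto
  also have "\<dots> = (\<integral>\<^sup>+ x. ennreal (h x) \<partial>M)"
    by (intro nn_integral_cong) (simp add: max_def ennreal_neg)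
  finally show ?thesis .
qed

lemma exp_jensen:
  fixes g :: "'a \<Rightarrow> real"
  assumes "prob_space M" "integrable M g"
  shows "ennreal (exp (integral\<^sup>L M g)) \<le> (\<integral>\<^sup>+ x. ennreal (exp (g x)) \<partial>M)"
proof -
  interpret prob_space M by fact
  define m where "m = integral\<^sup>L M g"
  have int: "integrable M (\<lambda>x. exp m * (1 + g x - m))"
    using assms(2) by auto
  have "integral\<^sup>L M (\<lambda>x. exp m * (1 + g x - m)) = exp m"
    using assms(2) by (simp add: m_def prob_space algebra_simps)
  hence "ennreal (exp m) = ennreal (integral\<^sup>L M (\<lambda>x. exp m * (1 + g x - m)))" by simp
  also have "\<dots> \<le> (\<integral>\<^sup>+ x. ennreal (exp m * (1 + g x - m)) \<partial>M)"
    by (rule ennreal_integral_le_nn[OF int])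
  also have "\<dots> \<le> (\<integral>\<^sup>+ x. ennreal (exp (g x)) \<partial>M)"
  proof (intro nn_integral_mono ennreal_leI)
    fix x
    have "exp (g x - m) \<ge> 1 + (g x - m)" by (rule exp_ge_add_one_self)
    hence "exp m * exp (g x - m) \<ge> exp m * (1 + (g x - m))" by simp
    thus "exp m * (1 + g x - m) \<le> exp (g x)" by (simp add: exp_diff algebra_simps)
  qed
  finally show ?thesis by (simp add: m_def)
qed

lemma eln_lower: "ennreal (exp a) \<le> I \<Longrightarrow> ereal a \<le> eln I"
proof -
  assume h: "ennreal (exp a) \<le> I"
  show ?thesis
  proof (cases "I = \<infinity>")
    case False
    have "0 < I" using h less_le_trans[of 0 "ennreal (exp a)" I] by simp
    hence "I \<noteq> 0" by simp
    moreover have "enn2real (ennreal (exp a)) \<le> enn2real I" using h False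
      by (intro enn2real_mono) (auto simp: top.not_eq_extremum)
    hence "exp a \<le> enn2real I" by simp
    hence "ln (exp a) \<le> ln (enn2real I)"
      by (intro ln_mono) auto
    ultimately show ?thesis using False by (simp add: eln_def)
  qed (simp add: eln_def)
qed

lemma eln_upper: "I \<le> ennreal (exp b) \<Longrightarrow> eln I \<le> ereal b"
proof -
  assume h: "I \<le> ennreal (exp b)"
  show ?thesis
  proof (cases "I = 0")
    case False
    have lt: "I < top" using le_less_trans[OF h ennreal_less_top] .
    hence fin: "I \<noteq> \<infinity>" by simp
    have "enn2real I \<le> enn2real (ennreal (exp b))" using h
      by (intro enn2real_mono) auto
    hence "enn2real I \<le> exp b" by simp
    moreover have "enn2real I > 0" using False lt
      by (simp add: enn2real_positive_iff zero_less_iff_neq_zero)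
    ultimately have "ln (enn2real I) \<le> ln (exp b)"
      by (intro ln_mono) auto
    thus ?thesis using False fin by (simp add: eln_def)
  qed (simp add: eln_def)
qed

lemma eexp_ereal[simp]: "eexp (ereal r) = ennreal (exp r)"
  by (simp add: eexp_def)

lemma eexp_mono: "a \<le> b \<Longrightarrow> eexp a \<le> eexp b"
  by (cases a; cases b) (auto simp: eexp_def ennreal_leI)

lemma pw_nonneg: "0 \<le> pw t a"
  by (simp add: pw_def)

lemma pw_le1:
  assumes "0 \<le> t" "0 \<le> \<alpha>" "\<alpha> \<le> p" "0 < p"
  shows "pw t \<alpha> \<le> (1 + t powr p) powr (\<alpha> / p)"
proof (cases "\<alpha> = 0")
  case True
  have "0 < 1 + t powr p" by (simp add: add_pos_nonneg)
  thus ?thesis using True by (simp add: pw_def)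
next
  case False
  have "pw t \<alpha> = (t powr p) powr (\<alpha> / p)"
    using False assms by (simp add: pw_def powr_powr)
  also have "\<dots> \<le> (1 + t powr p) powr (\<alpha> / p)"
    using assms by (intro powr_mono2) auto
  finally show ?thesis .
qed

lemma pw_le2:
  assumes "0 \<le> t" "0 \<le> \<alpha>" "\<alpha> \<le> p" "0 < p"
  shows "pw t \<alpha> \<le> 1 + t powr p"
proof -
  have "pw t \<alpha> \<le> (1 + t powr p) powr (\<alpha> / p)" by (rule pw_le1[OF assms])
  also have "\<dots> \<le> (1 + t powr p) powr 1"
    using assms by (intro powr_mono) auto
  also have "\<dots> = 1 + t powr p"
    by (simp add: add_nonneg_nonneg)
  finally show ?thesis .
qed

lemma young_pw:
  assumes a: "0 \<le> a" and d: "0 < \<delta>" and t: "0 \<le> t" and b: "0 \<le> \<beta>" "\<beta> < p"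
  shows "a * pw t \<beta> \<le> \<delta> * t powr p + a powr (p / (p - \<beta>)) * \<delta> powr (- \<beta> / (p - \<beta>))"
proof (cases "\<beta> = 0")
  case True
  have "0 \<le> \<delta> * t powr p" using d by simp
  moreover have "p \<noteq> 0" using b True by simp
  ultimately show ?thesis using True a d by (simp add: pw_def)
next
  case False
  define q where "q = p - \<beta>"
  have q: "0 < q" using b by (simp add: q_def)
  have pw: "pw t \<beta> = t powr \<beta>" using False by (simp add: pw_def)
  have R: "0 \<le> a powr (p / q) * \<delta> powr (- \<beta> / q)" by simp
  show ?thesis
  proof (cases "a \<le> \<delta> * t powr q")
    case True
    have "a * t powr \<beta> \<le> (\<delta> * t powr q) * t powr \<beta>"
      using True by (intro mult_right_mono) auto
    also have "\<dots> = \<delta> * t powr p"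
      by (simp add: q_def powr_add[symmetric] mult.assoc)
    finally have "a * pw t \<beta> \<le> \<delta> * t powr p" using pw by simp
    thus ?thesis using R unfolding q_def by linarith
  next
    case False
    hence lt: "t powr q < a / \<delta>" using d by (simp add: field_simps mult.commute)
    have apos: "0 < a" using False d t
      by (meson less_le_trans mult_nonneg_nonneg not_le powr_ge_zero less_eq_real_def)
    have "t powr \<beta> = (t powr q) powr (\<beta> / q)"
      using q by (simp add: powr_powr)
    also have "\<dots> \<le> (a / \<delta>) powr (\<beta> / q)"
      using lt b q by (intro powr_mono2) auto
    also have "\<dots> = a powr (\<beta> / q) * \<delta> powr (- \<beta> / q)"
      using apos d by (simp add: powr_divide powr_minus_divide divide_simps)
    finally have "a * t powr \<beta> \<le> a * (a powr (\<beta> / q) * \<delta> powr (- \<beta> / q))"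
      using apos by (intro mult_left_mono) auto
    also have "\<dots> = a powr (p / q) * \<delta> powr (- \<beta> / q)"
    proof -
      have "a * a powr (\<beta> / q) = a powr (1 + \<beta> / q)"
        using apos by (simp add: powr_add)
      also have "1 + \<beta> / q = p / q" using q by (simp add: q_def field_simps)
      finally show ?thesis by (simp add: mult.assoc[symmetric])
    qed
    finally show ?thesis using pw q_def d t
      by (smt (verit) mult_nonneg_nonneg powr_ge_zero)
  qed
qed

lemma term_bound:
  fixes s r p \<alpha> \<beta> Kp Km m t ty \<delta> :: real
  assumes s: "1 \<le> s" and qr: "p / (p - \<beta>) \<le> r" and b: "0 \<le> \<beta>" "\<beta> < p"
    and al: "0 \<le> \<alpha>" "\<alpha> + \<beta> \<le> p"
    and K: "0 \<le> Kp" "0 \<le> Km" "0 \<le> m" and t: "0 \<le> t" "0 \<le> ty" and d: "0 < \<delta>"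
  shows "s * (Kp * m + Km * pw t \<alpha>) * pw ty \<beta> \<le> \<delta> * ty powr p
     + s powr r * ((Kp * m + Km) powr (p / (p - \<beta>)) * \<delta> powr (- \<beta> / (p - \<beta>))) * (1 + t powr p)"
proof -
  define u where "u = 1 + t powr p"
  define q where "q = p / (p - \<beta>)"
  define G where "G = Kp * m + Km"
  have p: "0 < p" using b by simp
  have u1: "1 \<le> u" by (simp add: u_def)
  have q0: "0 \<le> q" using b by (simp add: q_def)
  have G0: "0 \<le> G" using K by (simp add: G_def)
  have ua: "1 \<le> u powr (\<alpha> / p)" using u1 al p by (simp add: ge_one_powr_ge_zero)
  have E: "Kp * m + Km * pw t \<alpha> \<le> G * u powr (\<alpha> / p)"
  proof -
    have "pw t \<alpha> \<le> u powr (\<alpha> / p)" unfolding u_def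
      using pw_le1[of t \<alpha> p] t al b by simp
    hence "Km * pw t \<alpha> \<le> Km * u powr (\<alpha> / p)" using K by (intro mult_left_mono) auto
    moreover have "Kp * m * 1 \<le> Kp * m * u powr (\<alpha> / p)" using ua K
      by (intro mult_left_mono) auto
    ultimately show ?thesis by (simp add: G_def distrib_right)
  qed
  have E0: "0 \<le> Kp * m + Km * pw t \<alpha>" using K pw_nonneg by simp
  have "s * (Kp * m + Km * pw t \<alpha>) * pw ty \<beta> \<le> \<delta> * ty powr p
     + (s * (Kp * m + Km * pw t \<alpha>)) powr q * \<delta> powr (- \<beta> / (p - \<beta>))"
    unfolding q_def using young_pw[of "s * (Kp * m + Km * pw t \<alpha>)" \<delta> ty \<beta> p] s E0 d t b by simp
  also have "(s * (Kp * m + Km * pw t \<alpha>)) powr q \<le> (s * (G * u powr (\<alpha> / p))) powr q"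
    using E E0 s q0 by (intro powr_mono2 mult_left_mono) auto
  also have "\<dots> = s powr q * G powr q * u powr (\<alpha> / p * q)"
    using s G0 u1 by (simp add: powr_mult powr_powr)
  also have "\<dots> \<le> s powr r * G powr q * u"
  proof -
    have "s powr q \<le> s powr r" using s qr by (intro powr_mono) (auto simp: q_def)
    moreover have "u powr (\<alpha> / p * q) \<le> u powr 1"
      using u1 al b p by (intro powr_mono) (auto simp: q_def field_simps)
    ultimately show ?thesis using u1 s
      by (intro mult_mono) auto
  qed
  finally show ?thesis using d
    by (simp add: u_def q_def G_def mult_right_mono mult.assoc mult.commute mult.left_commute)
qed

theorem theorem5p7:
  fixes mu :: "'a::polish_space measure" and nu :: "'b::polish_space measure"
    and x0 :: 'a and y0 :: 'b and c :: "'a \<Rightarrow> 'b \<Rightarrow> real"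
    and c1 :: "'a \<Rightarrow> real" and c2 :: "'b \<Rightarrow> real" and chat :: "'a \<Rightarrow> 'b \<Rightarrow> real"
    and ap am :: "'a \<Rightarrow> real" and p lam M :: real and N :: nat
    and al be Kp Km :: "nat \<Rightarrow> real"
  assumes "prob_space mu" and "sets mu = sets borel"
    and "prob_space nu" and "sets nu = sets borel"
    and "(\<lambda>(x, y). c x y) \<in> borel_measurable (mu \<Otimes>\<^sub>M nu)"
    and "p > 0" and "lam > 0"
    and "integrable nu (\<lambda>y. exp (lam * dist y y0 powr p))"
    and "\<forall>i\<in>{1..N}. 0 \<le> al i \<and> al i \<le> p \<and> 0 \<le> be i \<and> be i < p \<and> al i + be i \<le> p"
    and "\<forall>i\<in>{1..N}. Kp i \<ge> 0 \<and> Km i \<ge> 0"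
    and "integrable mu c1" and "integrable nu c2"
    and "\<forall>x y. c x y = c1 x + c2 y + chat x y"
    and "ap \<in> borel_measurable mu" and "am \<in> borel_measurable mu"
    and "\<forall>x. ap x \<ge> 0 \<and> am x \<ge> 0"
    and "integrable mu ap"
    and "\<forall>x y. - am x - (\<Sum>i=1..N. Km i * pw (dist x x0) (al i) * pw (dist y y0) (be i)) \<le> chat x y"
    and "\<forall>x y. chat x y \<le> ap x + (\<Sum>i=1..N. Kp i * pw (dist x x0) (al i) * pw (dist y y0) (be i))"
    and "integrable mu (\<lambda>x. dist x x0 powr p)"
    and "\<forall>x. \<bar>c1 x\<bar> + ap x + am x \<le> M * (1 + dist x x0 powr p)"
    and "\<forall>y. \<bar>c2 y\<bar> \<le> M * (1 + dist y y0 powr p)"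
  shows "\<exists>K. conj_bound mu nu c x0 p K \<and>
           (\<forall>\<epsilon>. 0 < \<epsilon> \<and> \<epsilon> < 1 \<longrightarrow>
              conj_bound mu nu (\<lambda>x y. c x y / \<epsilon>) x0 p
                (\<epsilon> powr (- max (p / (p - Max (insert 0 (be ` {1..N})))) 1) * K))"
proof -
  interpret mu: prob_space mu by fact
  interpret nu: prob_space nu by fact
  have smu: "space mu = UNIV" using sets_eq_imp_space_eq[OF assms(2)] by simp
  have snu: "space nu = UNIV" using sets_eq_imp_space_eq[OF assms(4)] by simp
  have bmu: "borel_measurable mu = borel_measurable borel"
    by (rule measurable_cong_sets) (simp_all add: assms(2))
  have bnu: "borel_measurable nu = borel_measurable borel"
    by (rule measurable_cong_sets) (simp_all add: assms(4))
  have cm: "(\<lambda>(x, y). c x y) \<in> borel_measurable (mu \<Otimes>\<^sub>M nu)" by fact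
  have cmx: "(\<lambda>x. c x y) \<in> borel_measurable mu" for y
    using measurable_Pair1[OF cm, of y] snu by simp
  have cmy: "(\<lambda>y. c x y) \<in> borel_measurable nu" for x
    using measurable_Pair2[OF cm, of x] smu by simp
  have p0: "0 < p" by fact
  have pwmx: "(\<lambda>x. pw (dist x x0) a) \<in> borel_measurable mu" for a
    unfolding bmu pw_def by measurable
  have pwmy: "(\<lambda>y. pw (dist y y0) a) \<in> borel_measurable nu" for a
    unfolding bnu pw_def by measurable
  have ipx: "integrable mu (\<lambda>x. dist x x0 powr p)" by fact
  have ipwx: "integrable mu (\<lambda>x. pw (dist x x0) a)" if "0 \<le> a" "a \<le> p" for a
    by (rule Bochner_Integration.integrable_bound[OF Bochner_Integration.integrable_add[OF mu.integrable_const[of 1] ipx] pwmx])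
      (use that p0 in \<open>auto simp: pw_nonneg pw_le2\<close>)
  have iexp: "integrable nu (\<lambda>y. exp (lam * dist y y0 powr p))" by fact
  have iyp: "integrable nu (\<lambda>y. dist y y0 powr p)"
  proof (rule Bochner_Integration.integrable_bound[OF integrable_mult_right[of "1/lam", OF iexp]])
    show "(\<lambda>y. dist y y0 powr p) \<in> borel_measurable nu" unfolding bnu by measurable
    show "AE y in nu. norm (dist y y0 powr p) \<le> norm (1 / lam * exp (lam * dist y y0 powr p))"
    proof (intro AE_I2)
      fix y
      have "lam * dist y y0 powr p \<le> exp (lam * dist y y0 powr p)"
        using exp_ge_add_one_self[of "lam * dist y y0 powr p"] by linarith
      thus "norm (dist y y0 powr p) \<le> norm (1 / lam * exp (lam * dist y y0 powr p))"
        using assms(7) by (simp add: field_simps)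
    qed
  qed
  have ipwy: "integrable nu (\<lambda>y. pw (dist y y0) a)" if "0 \<le> a" "a \<le> p" for a
    by (rule Bochner_Integration.integrable_bound[OF Bochner_Integration.integrable_add[OF nu.integrable_const[of 1] iyp] pwmy])
      (use that p0 in \<open>auto simp: pw_nonneg pw_le2\<close>)
  have M0: "0 \<le> M"
  proof -
    have "\<bar>c1 x0\<bar> + ap x0 + am x0 \<le> M" using assms(21)[rule_format, of x0] by simp
    thus ?thesis using assms(16)[rule_format, of x0] by linarith
  qed
  have iam: "integrable mu am"
  proof (rule Bochner_Integration.integrable_bound[OF integrable_mult_right[of M, OF Bochner_Integration.integrable_add[OF mu.integrable_const[of 1] ipx]]])
    show "am \<in> borel_measurable mu" by fact
    show "AE x in mu. norm (am x) \<le> norm (M * (1 + dist x x0 powr p))"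
      using assms(21,16) M0 by (intro AE_I2) (smt (verit) real_norm_def)
  qed

  have alb: "0 \<le> al i" "al i \<le> p" "0 \<le> be i" "be i < p" "al i + be i \<le> p" "be i \<le> p"
    if "i \<in> {1..N}" for i using assms(9) that by force+
  have Kb: "0 \<le> Kp i" "0 \<le> Km i" if "i \<in> {1..N}" for i using assms(10) that by auto
  have apam: "0 \<le> ap x" "0 \<le> am x" for x using assms(16) by auto
  have hab: "\<bar>chat x y\<bar> \<le> ap x + am x
      + (\<Sum>i=1..N. (Kp i + Km i) * pw (dist x x0) (al i) * pw (dist y y0) (be i))" for x y
  proof -
    have s1: "0 \<le> (\<Sum>i=1..N. Kp i * pw (dist x x0) (al i) * pw (dist y y0) (be i))"
      using Kb by (intro sum_nonneg) (simp add: pw_nonneg)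
    have s2: "0 \<le> (\<Sum>i=1..N. Km i * pw (dist x x0) (al i) * pw (dist y y0) (be i))"
      using Kb by (intro sum_nonneg) (simp add: pw_nonneg)
    have "(\<Sum>i=1..N. (Kp i + Km i) * pw (dist x x0) (al i) * pw (dist y y0) (be i))
      = (\<Sum>i=1..N. Kp i * pw (dist x x0) (al i) * pw (dist y y0) (be i))
      + (\<Sum>i=1..N. Km i * pw (dist x x0) (al i) * pw (dist y y0) (be i))"
      by (simp add: distrib_right sum.distrib)
    thus ?thesis using assms(18)[rule_format, of x y] assms(19)[rule_format, of x y] apam[of x] s1 s2
      by (smt (verit))
  qed
  have cdom: "\<bar>c x y\<bar> \<le> \<bar>c1 x\<bar> + \<bar>c2 y\<bar> + ap x + am x
      + (\<Sum>i=1..N. (Kp i + Km i) * pw (dist x x0) (al i) * pw (dist y y0) (be i))" for x y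
    using hab[of x y] assms(13)[rule_format, of x y] by (smt (verit))
  have icx: "integrable mu (\<lambda>x. c x y)" for y
  proof (rule Bochner_Integration.integrable_bound[OF _ cmx])
    show "integrable mu (\<lambda>x. \<bar>c1 x\<bar> + \<bar>c2 y\<bar> + ap x + am x
      + (\<Sum>i=1..N. (Kp i + Km i) * pw (dist x x0) (al i) * pw (dist y y0) (be i)))"
      using assms(11,17) iam ipwx alb
      by (intro Bochner_Integration.integrable_add Bochner_Integration.integrable_sum integrable_mult_left integrable_mult_right
          integrable_abs mu.integrable_const) auto
    show "AE x in mu. norm (c x y) \<le> norm (\<bar>c1 x\<bar> + \<bar>c2 y\<bar> + ap x + am x
      + (\<Sum>i=1..N. (Kp i + Km i) * pw (dist x x0) (al i) * pw (dist y y0) (be i)))"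
      using cdom by (intro AE_I2) (auto intro: order_trans[OF _ abs_ge_self])
  qed
  have icy: "integrable nu (\<lambda>y. c x y)" for x
  proof (rule Bochner_Integration.integrable_bound[OF _ cmy])
    show "integrable nu (\<lambda>y. \<bar>c1 x\<bar> + \<bar>c2 y\<bar> + ap x + am x
      + (\<Sum>i=1..N. (Kp i + Km i) * pw (dist x x0) (al i) * pw (dist y y0) (be i)))"
      using assms(12) ipwy alb
      by (intro Bochner_Integration.integrable_add Bochner_Integration.integrable_sum integrable_mult_left integrable_mult_right
          integrable_abs nu.integrable_const) auto
    show "AE y in nu. norm (c x y) \<le> norm (\<bar>c1 x\<bar> + \<bar>c2 y\<bar> + ap x + am x
      + (\<Sum>i=1..N. (Kp i + Km i) * pw (dist x x0) (al i) * pw (dist y y0) (be i)))"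
      using cdom by (intro AE_I2) (auto intro: order_trans[OF _ abs_ge_self])
  qed

  define mI where "mI i = (\<integral>x. pw (dist x x0) (al i) \<partial>mu)" for i
  define nI where "nI i = (\<integral>y. pw (dist y y0) (be i) \<partial>nu)" for i
  define J where "J = (\<integral>y. exp (lam * dist y y0 powr p) \<partial>nu)"
  define Bc where "Bc = integral\<^sup>L mu c1 + integral\<^sup>L mu ap"
  define r where "r = max (p / (p - Max (insert 0 (be ` {1..N})))) 1"
  define \<delta> where "\<delta> = lam / (real N + 1)"
  define Dl where "Dl i = (Kp i * mI i + Km i) powr (p / (p - be i)) * \<delta> powr (- be i / (p - be i))" for i
  define H where "H = \<bar>Bc\<bar> + M + (\<Sum>i=1..N. Dl i) + ln J"
  define Cup where "Cup = M + \<bar>integral\<^sup>L nu c2\<bar> + (\<Sum>i=1..N. Kp i * nI i)"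
  define K0 where "K0 = Cup + H"
  have mI0: "0 \<le> mI i" for i unfolding mI_def by (simp add: pw_nonneg)
  have nI0: "0 \<le> nI i" for i unfolding nI_def by (simp add: pw_nonneg)
  have d0: "0 < \<delta>" using assms(7) by (simp add: \<delta>_def)
  have Nd: "real N * \<delta> \<le> lam" using assms(7) by (simp add: \<delta>_def field_simps)
  have J1: "1 \<le> J"
  proof -
    have "(\<integral>y. 1 \<partial>nu) \<le> J" unfolding J_def
      using iexp assms(7) by (intro Bochner_Integration.integral_mono) (auto intro: nu.integrable_const)
    thus ?thesis by (simp add: nu.prob_space)
  qed
  have lnJ: "0 \<le> ln J" using J1 by simp
  have r1: "1 \<le> r" by (simp add: r_def)
  have qr: "p / (p - be i) \<le> r" if "i \<in> {1..N}" for i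
  proof -
    define Mx where "Mx = Max (insert 0 (be ` {1..N}))"
    have "be i \<le> Mx" unfolding Mx_def using that by (intro Max_ge) auto
    moreover have "Mx < p"
    proof -
      have "Mx \<in> insert 0 (be ` {1..N})" unfolding Mx_def by (intro Max_in) auto
      thus ?thesis using p0 alb by auto
    qed
    ultimately have "p / (p - be i) \<le> p / (p - Mx)"
      using p0 by (intro divide_left_mono) auto
    thus ?thesis unfolding r_def Mx_def by linarith
  qed
  have Dl0: "0 \<le> Dl i" for i unfolding Dl_def by simp
  have H0: "0 \<le> H" unfolding H_def using M0 lnJ Dl0 by (simp add: sum_nonneg)
  have Cup0: "0 \<le> Cup"
  proof -
    have "0 \<le> (\<Sum>i=1..N. Kp i * nI i)" using Kb nI0 by (intro sum_nonneg) simp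
    thus ?thesis unfolding Cup_def using M0 by simp
  qed
  have key: "conj_bound mu nu (\<lambda>x y. s * c x y) x0 p (s powr r * K0)" if s1: "1 \<le> s" for s
    unfolding conj_bound_def
  proof (intro allI impI)
    fix f :: "'a \<Rightarrow> real" and z :: 'a
    assume fint: "integrable mu f"
      and L1: "ereal_L1 nu (cconj mu (\<lambda>x y. s * c x y) (\<lambda>x. ereal (f x)))"
    define G where "G = cconj mu (\<lambda>x y. s * c x y) (\<lambda>x. ereal (f x))"
    define F where "F = (\<lambda>y. real_of_ereal (G y))"
    define Pf where "Pf = (\<integral>x. negpart (f x) \<partial>mu)"
    define PF where "PF = (\<integral>y. negpart (F y) \<partial>nu)"
    define u where "u = 1 + dist z x0 powr p"
    have Fint: "integrable nu F" using L1 by (simp add: ereal_L1_def F_def G_def)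
    have "AE y in nu. \<bar>G y\<bar> \<noteq> \<infinity>" using L1 by (simp add: ereal_L1_def G_def)
    hence Gae: "AE y in nu. G y = ereal (F y)"
      by eventually_elim (simp add: F_def ereal_real')
    have s0: "0 \<le> s" using s1 by simp
    have sr: "s \<le> s powr r"
    proof -
      have "s powr 1 \<le> s powr r" using s1 r1 by (intro powr_mono) auto
      thus ?thesis using s0 by simp
    qed
    have sr1: "1 \<le> s powr r" using s1 r1 by (simp add: ge_one_powr_ge_zero)
    have u1: "1 \<le> u" by (simp add: u_def)
    have inf: "integrable mu (\<lambda>x. negpart (f x))" unfolding negpart_def using fint by auto
    have inF: "integrable nu (\<lambda>y. negpart (F y))" unfolding negpart_def using Fint by auto
    have Pf0: "0 \<le> Pf" unfolding Pf_def negpart_def by simp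
    have PF0: "0 \<le> PF" unfolding PF_def negpart_def by simp
    have fPf: "- Pf \<le> integral\<^sup>L mu f"
    proof -
      have "(\<integral>x. - negpart (f x) \<partial>mu) \<le> integral\<^sup>L mu f"
        using inf fint by (intro Bochner_Integration.integral_mono) (auto simp: negpart_def)
      thus ?thesis by (simp add: Pf_def)
    qed
    have FPF: "- PF \<le> integral\<^sup>L nu F"
    proof -
      have "(\<integral>y. - negpart (F y) \<partial>nu) \<le> integral\<^sup>L nu F"
        using inF Fint by (intro Bochner_Integration.integral_mono) (auto simp: negpart_def)
      thus ?thesis by (simp add: PF_def)
    qed
    have GA: "G y \<le> ereal (Pf + s * (Bc + c2 y + (\<Sum>i=1..N. Kp i * mI i * pw (dist y y0) (be i))))" for y
    proof -
      have ig: "integrable mu (\<lambda>x. f x - s * c x y)" using fint icx[of y] by auto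
      have "ennreal (exp (\<integral>x. f x - s * c x y \<partial>mu)) \<le> (\<integral>\<^sup>+x. ennreal (exp (f x - s * c x y)) \<partial>mu)"
        by (rule exp_jensen[OF assms(1) ig])
      also have "\<dots> = (\<integral>\<^sup>+x. eexp (ereal (f x) - ereal (s * c x y)) \<partial>mu)" by simp
      finally have "ereal (\<integral>x. f x - s * c x y \<partial>mu) \<le> eln (\<integral>\<^sup>+x. eexp (ereal (f x) - ereal (s * c x y)) \<partial>mu)"
        by (rule eln_lower)
      hence "G y \<le> ereal (- (\<integral>x. f x - s * c x y \<partial>mu))" unfolding G_def cconj_def
        by (simp add: ereal_uminus_le_reorder)
      also have "- (\<integral>x. f x - s * c x y \<partial>mu) \<le> Pf + s * (Bc + c2 y + (\<Sum>i=1..N. Kp i * mI i * pw (dist y y0) (be i)))"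
      proof -
        have e1: "(\<integral>x. f x - s * c x y \<partial>mu) = integral\<^sup>L mu f - s * (\<integral>x. c x y \<partial>mu)"
          using fint icx[of y] by (simp add: Bochner_Integration.integral_diff)
        have iS: "integrable mu (\<lambda>x. (\<Sum>i=1..N. Kp i * pw (dist x x0) (al i) * pw (dist y y0) (be i)))"
          using ipwx alb by (intro Bochner_Integration.integrable_sum integrable_mult_left integrable_mult_right) auto
        have "(\<integral>x. c x y \<partial>mu) \<le> (\<integral>x. c1 x + ap x + (c2 y + (\<Sum>i=1..N. Kp i * pw (dist x x0) (al i) * pw (dist y y0) (be i))) \<partial>mu)"
        proof (rule Bochner_Integration.integral_mono[OF icx])
          show "integrable mu (\<lambda>x. c1 x + ap x + (c2 y + (\<Sum>i=1..N. Kp i * pw (dist x x0) (al i) * pw (dist y y0) (be i))))"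
            using assms(11,17) iS by auto
          fix x show "c x y \<le> c1 x + ap x + (c2 y + (\<Sum>i=1..N. Kp i * pw (dist x x0) (al i) * pw (dist y y0) (be i)))"
            using assms(13)[rule_format, of x y] assms(19)[rule_format, of x y] by linarith
        qed
        also have "\<dots> = integral\<^sup>L mu c1 + integral\<^sup>L mu ap + (c2 y + (\<Sum>i=1..N. Kp i * mI i * pw (dist y y0) (be i)))"
        proof -
          have "(\<integral>x. (\<Sum>i=1..N. Kp i * pw (dist x x0) (al i) * pw (dist y y0) (be i)) \<partial>mu)
              = (\<Sum>i=1..N. Kp i * mI i * pw (dist y y0) (be i))"
            using ipwx alb by (subst Bochner_Integration.integral_sum) (auto simp: mI_def)
          thus ?thesis using assms(11,17) iS
            by (simp add: Bochner_Integration.integral_add mu.prob_space)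
        qed
        finally have "(\<integral>x. c x y \<partial>mu) \<le> Bc + c2 y + (\<Sum>i=1..N. Kp i * mI i * pw (dist y y0) (be i))"
          by (simp add: Bc_def)
        hence "s * (\<integral>x. c x y \<partial>mu) \<le> s * (Bc + c2 y + (\<Sum>i=1..N. Kp i * mI i * pw (dist y y0) (be i)))"
          using s0 by (rule mult_left_mono)
        thus ?thesis using e1 fPf by linarith
      qed
      finally show ?thesis by simp
    qed
    have UP: "ccconj nu (\<lambda>x y. s * c x y) G z \<le> ereal (PF + s powr r * Cup * u)"
    proof -
      have ig: "integrable nu (\<lambda>y. F y - s * c z y)" using Fint icy[of z] by auto
      have "ennreal (exp (\<integral>y. F y - s * c z y \<partial>nu)) \<le> (\<integral>\<^sup>+y. ennreal (exp (F y - s * c z y)) \<partial>nu)"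
        by (rule exp_jensen[OF assms(3) ig])
      also have "\<dots> = (\<integral>\<^sup>+y. eexp (G y - ereal (s * c z y)) \<partial>nu)"
        by (intro nn_integral_cong_AE, use Gae in eventually_elim) simp
      finally have "ereal (\<integral>y. F y - s * c z y \<partial>nu) \<le> eln (\<integral>\<^sup>+y. eexp (G y - ereal (s * c z y)) \<partial>nu)"
        by (rule eln_lower)
      hence "ccconj nu (\<lambda>x y. s * c x y) G z \<le> ereal (- (\<integral>y. F y - s * c z y \<partial>nu))"
        unfolding ccconj_def by (simp add: ereal_uminus_le_reorder)
      also have "- (\<integral>y. F y - s * c z y \<partial>nu) \<le> PF + s powr r * Cup * u"
      proof -
        have e1: "(\<integral>y. F y - s * c z y \<partial>nu) = integral\<^sup>L nu F - s * (\<integral>y. c z y \<partial>nu)"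
          using Fint icy[of z] by (simp add: Bochner_Integration.integral_diff)
        have iS: "integrable nu (\<lambda>y. (\<Sum>i=1..N. Kp i * pw (dist z x0) (al i) * pw (dist y y0) (be i)))"
          using ipwy alb by (intro Bochner_Integration.integrable_sum integrable_mult_left integrable_mult_right) auto
        have "(\<integral>y. c z y \<partial>nu) \<le> (\<integral>y. c1 z + ap z + (c2 y + (\<Sum>i=1..N. Kp i * pw (dist z x0) (al i) * pw (dist y y0) (be i))) \<partial>nu)"
        proof (rule Bochner_Integration.integral_mono[OF icy])
          show "integrable nu (\<lambda>y. c1 z + ap z + (c2 y + (\<Sum>i=1..N. Kp i * pw (dist z x0) (al i) * pw (dist y y0) (be i))))"
            using assms(12) iS by auto
          fix y show "c z y \<le> c1 z + ap z + (c2 y + (\<Sum>i=1..N. Kp i * pw (dist z x0) (al i) * pw (dist y y0) (be i)))"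
            using assms(13)[rule_format, of z y] assms(19)[rule_format, of z y] by linarith
        qed
        also have "\<dots> = c1 z + ap z + (integral\<^sup>L nu c2 + (\<Sum>i=1..N. Kp i * pw (dist z x0) (al i) * nI i))"
        proof -
          have "(\<integral>y. (\<Sum>i=1..N. Kp i * pw (dist z x0) (al i) * pw (dist y y0) (be i)) \<partial>nu)
              = (\<Sum>i=1..N. Kp i * pw (dist z x0) (al i) * nI i)"
            using ipwy alb by (subst Bochner_Integration.integral_sum) (auto simp: nI_def)
          thus ?thesis using assms(12) iS
            by (simp add: Bochner_Integration.integral_add nu.prob_space)
        qed
        also have "\<dots> \<le> Cup * u"
        proof -
          have a1: "c1 z + ap z \<le> M * u"
            using assms(21)[rule_format, of z] apam[of z] by (simp add: u_def)
          have a2: "integral\<^sup>L nu c2 \<le> \<bar>integral\<^sup>L nu c2\<bar> * u"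
            using u1 by (smt (verit) abs_ge_zero mult_le_cancel_left1)
          have a3: "(\<Sum>i=1..N. Kp i * pw (dist z x0) (al i) * nI i) \<le> (\<Sum>i=1..N. Kp i * nI i) * u"
            unfolding sum_distrib_right
          proof (rule sum_mono)
            fix i assume i: "i \<in> {1..N}"
            have "pw (dist z x0) (al i) \<le> u" unfolding u_def using alb[OF i] p0 by (intro pw_le2) auto
            hence "Kp i * nI i * pw (dist z x0) (al i) \<le> Kp i * nI i * u"
              using Kb[OF i] nI0[of i] by (intro mult_left_mono) auto
            thus "Kp i * pw (dist z x0) (al i) * nI i \<le> Kp i * nI i * u" by (simp add: mult_ac)
          qed
          show ?thesis using a1 a2 a3 unfolding Cup_def by (simp add: distrib_right)
        qed
        finally have "(\<integral>y. c z y \<partial>nu) \<le> Cup * u" .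
        hence "s * (\<integral>y. c z y \<partial>nu) \<le> s * (Cup * u)" using s0 by (rule mult_left_mono)
        also have "\<dots> \<le> s powr r * (Cup * u)" using sr Cup0 u1 by (intro mult_right_mono) auto
        finally show ?thesis using e1 FPF by (simp add: mult.assoc)
      qed
      finally show ?thesis by simp
    qed
    have LO: "- ereal (Pf + s powr r * H * u) \<le> ccconj nu (\<lambda>x y. s * c x y) G z"
    proof -
      define \<Phi> where "\<Phi> = Pf + s powr r * (H - ln J) * u"
      have REAL: "Pf + s * (Bc + c2 y + (\<Sum>i=1..N. Kp i * mI i * pw (dist y y0) (be i))) - s * c z y
          \<le> \<Phi> + lam * dist y y0 powr p" for y
      proof -
        have cz: "c1 z + c2 y - am z - (\<Sum>i=1..N. Km i * pw (dist z x0) (al i) * pw (dist y y0) (be i)) \<le> c z y"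
          using assms(13)[rule_format, of z y] assms(18)[rule_format, of z y] by linarith
        have T: "(\<Sum>i=1..N. s * (Kp i * mI i + Km i * pw (dist z x0) (al i)) * pw (dist y y0) (be i))
            \<le> (\<Sum>i=1..N. \<delta> * dist y y0 powr p + s powr r * Dl i * u)"
        proof (rule sum_mono)
          fix i assume i: "i \<in> {1..N}"
          show "s * (Kp i * mI i + Km i * pw (dist z x0) (al i)) * pw (dist y y0) (be i)
              \<le> \<delta> * dist y y0 powr p + s powr r * Dl i * u"
            unfolding Dl_def u_def
            using term_bound[OF s1 qr[OF i] alb(3,4)[OF i] alb(1,5)[OF i] Kb[OF i] mI0[of i]
                zero_le_dist[of z x0] zero_le_dist[of y y0] d0] .
        qed
        have T2: "(\<Sum>i=1..N. \<delta> * dist y y0 powr p + s powr r * Dl i * u)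
            = real N * \<delta> * dist y y0 powr p + s powr r * (\<Sum>i=1..N. Dl i) * u"
          by (simp add: sum.distrib sum_distrib_left sum_distrib_right)
        have T3: "real N * \<delta> * dist y y0 powr p \<le> lam * dist y y0 powr p"
          using Nd by (intro mult_right_mono) auto
        have eqs: "s * (\<Sum>i=1..N. Kp i * mI i * pw (dist y y0) (be i))
            + s * (\<Sum>i=1..N. Km i * pw (dist z x0) (al i) * pw (dist y y0) (be i))
            = (\<Sum>i=1..N. s * (Kp i * mI i + Km i * pw (dist z x0) (al i)) * pw (dist y y0) (be i))"
          by (simp add: sum_distrib_left sum.distrib[symmetric] algebra_simps)
        have B1: "s * (Bc - c1 z + am z) \<le> s powr r * (\<bar>Bc\<bar> + M) * u"
        proof -
          have "- c1 z + am z \<le> M * u"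
            using assms(21)[rule_format, of z] apam[of z] by (simp add: u_def)
          moreover have "Bc \<le> \<bar>Bc\<bar> * u"
            using u1 by (smt (verit) abs_ge_zero mult_le_cancel_left1)
          ultimately have "Bc - c1 z + am z \<le> (\<bar>Bc\<bar> + M) * u" by (simp add: distrib_right)
          hence "s * (Bc - c1 z + am z) \<le> s * ((\<bar>Bc\<bar> + M) * u)" using s0 by (rule mult_left_mono)
          also have "\<dots> \<le> s powr r * ((\<bar>Bc\<bar> + M) * u)"
            using sr M0 u1 by (intro mult_right_mono) auto
          finally show ?thesis by (simp add: mult.assoc)
        qed
        have "Pf + s * (Bc + c2 y + (\<Sum>i=1..N. Kp i * mI i * pw (dist y y0) (be i))) - s * c z y
            \<le> Pf + s * (Bc - c1 z + am z) + (s * (\<Sum>i=1..N. Kp i * mI i * pw (dist y y0) (be i))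
            + s * (\<Sum>i=1..N. Km i * pw (dist z x0) (al i) * pw (dist y y0) (be i)))"
        proof -
          have "s * (c1 z + c2 y - am z - (\<Sum>i=1..N. Km i * pw (dist z x0) (al i) * pw (dist y y0) (be i)))
              \<le> s * c z y" using cz s0 by (rule mult_left_mono)
          thus ?thesis by (simp add: algebra_simps)
        qed
        also have "\<dots> \<le> \<Phi> + lam * dist y y0 powr p"
          using B1 T T2 T3 unfolding eqs \<Phi>_def H_def by (simp add: algebra_simps)
        finally show ?thesis .
      qed
      have pt: "eexp (G y - ereal (s * c z y)) \<le> ennreal (exp \<Phi>) * ennreal (exp (lam * dist y y0 powr p))" for y
      proof -
        have "G y - ereal (s * c z y) \<le> ereal (Pf + s * (Bc + c2 y + (\<Sum>i=1..N. Kp i * mI i * pw (dist y y0) (be i)))) - ereal (s * c z y)"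
          using GA[of y] by (rule ereal_minus_mono) simp
        also have "\<dots> \<le> ereal (\<Phi> + lam * dist y y0 powr p)" using REAL[of y] by simp
        finally have "eexp (G y - ereal (s * c z y)) \<le> eexp (ereal (\<Phi> + lam * dist y y0 powr p))"
          by (rule eexp_mono)
        thus ?thesis by (simp add: exp_add ennreal_mult)
      qed
      have mexp: "(\<lambda>y. ennreal (exp (lam * dist y y0 powr p))) \<in> borel_measurable nu"
        using borel_measurable_integrable[OF iexp] by measurable
      have "(\<integral>\<^sup>+y. eexp (G y - ereal (s * c z y)) \<partial>nu)
          \<le> (\<integral>\<^sup>+y. ennreal (exp \<Phi>) * ennreal (exp (lam * dist y y0 powr p)) \<partial>nu)"
        by (intro nn_integral_mono pt)
      also have "\<dots> = ennreal (exp \<Phi>) * (\<integral>\<^sup>+y. ennreal (exp (lam * dist y y0 powr p)) \<partial>nu)"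
        by (rule nn_integral_cmult[OF mexp])
      also have "(\<integral>\<^sup>+y. ennreal (exp (lam * dist y y0 powr p)) \<partial>nu) = ennreal J"
        unfolding J_def by (rule nn_integral_eq_integral[OF iexp]) simp
      also have "ennreal (exp \<Phi>) * ennreal J = ennreal (exp (\<Phi> + ln J))"
        using J1 by (simp add: exp_add ennreal_mult[symmetric])
      finally have "eln (\<integral>\<^sup>+y. eexp (G y - ereal (s * c z y)) \<partial>nu) \<le> ereal (\<Phi> + ln J)"
        by (rule eln_upper)
      hence "- ereal (\<Phi> + ln J) \<le> ccconj nu (\<lambda>x y. s * c x y) G z"
        unfolding ccconj_def ereal_minus_le_minus .
      moreover have "\<Phi> + ln J \<le> Pf + s powr r * H * u"
      proof -
        have "1 * 1 \<le> s powr r * u" using sr1 u1 by (intro mult_mono) auto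
        hence "ln J * 1 \<le> ln J * (s powr r * u)" using lnJ by (intro mult_left_mono) auto
        thus ?thesis unfolding \<Phi>_def by (simp add: algebra_simps)
      qed
      ultimately show ?thesis by (smt (verit) ereal_less_eq(3) ereal_minus_le_minus order_trans)
    qed
    have fin: "\<bar>ccconj nu (\<lambda>x y. s * c x y) G z\<bar> \<le> ereal (Pf + PF + s powr r * K0 * u)"
    proof -
      have k: "s powr r * K0 * u = s powr r * Cup * u + s powr r * H * u"
        by (simp add: K0_def algebra_simps)
      have nn: "0 \<le> s powr r * Cup * u" "0 \<le> s powr r * H * u"
        using Cup0 H0 u1 by auto
      have b1: "PF + s powr r * Cup * u \<le> Pf + PF + s powr r * K0 * u"
        using k nn Pf0 by linarith
      have b2: "Pf + s powr r * H * u \<le> Pf + PF + s powr r * K0 * u"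
        using k nn PF0 by linarith
      show ?thesis
      proof (cases "ccconj nu (\<lambda>x y. s * c x y) G z")
        case (real x)
        thus ?thesis using UP LO b1 b2 by simp
      next
        case PInf
        thus ?thesis using UP by simp
      next
        case MInf
        thus ?thesis using LO by simp
      qed
    qed
    show "\<bar>ccconj nu (\<lambda>x y. s * c x y) (cconj mu (\<lambda>x y. s * c x y) (\<lambda>x. ereal (f x))) z\<bar>
          \<le> ereal ((\<integral>x. negpart (f x) \<partial>mu)
                   + (\<integral>y. negpart (real_of_ereal (cconj mu (\<lambda>x y. s * c x y) (\<lambda>x. ereal (f x)) y)) \<partial>nu)
                   + s powr r * K0 * (1 + dist z x0 powr p))"
      using fin unfolding G_def F_def Pf_def PF_def u_def by simp
  qed
  show ?thesis
  proof (intro exI conjI allI impI)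
    show "conj_bound mu nu c x0 p K0" using key[of 1] by simp
    fix \<epsilon> :: real assume e: "0 < \<epsilon> \<and> \<epsilon> < 1"
    have "1 \<le> 1 / \<epsilon>" using e by simp
    from key[OF this] have "conj_bound mu nu (\<lambda>x y. 1 / \<epsilon> * c x y) x0 p ((1 / \<epsilon>) powr r * K0)" .
    moreover have "(\<lambda>x y. 1 / \<epsilon> * c x y) = (\<lambda>x y. c x y / \<epsilon>)" by auto
    moreover have "(1 / \<epsilon>) powr r = \<epsilon> powr (- r)" using e by (simp add: powr_divide powr_minus_divide)
    ultimately show "conj_bound mu nu (\<lambda>x y. c x y / \<epsilon>) x0 p
        (\<epsilon> powr (- max (p / (p - Max (insert 0 (be ` {1..N})))) 1) * K0)"
      unfolding r_def by simp
  qed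
qed

end
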